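(* Let $\phi\colon\mathcal{A}^+\to\mathcal{C}^+$ and $\tau\colon\mathcal{B}^+\to\mathcal{C}^+$ be morphisms such that $\tau$ is $\ell$-proper with $\ell\ge|\phi|_1^4$, and $\phi(\mathcal{A}^+)\cap\tau(\mathcal{B}^{++})\neq\emptyset$. Then there exist an alphabet $\mathcal{D}$ and morphisms $q\colon\mathcal{B}^+\to\mathcal{D}^+$, $p\colon\mathcal{D}^+\to\mathcal{C}^+$ such that (i) $\#\mathcal{D}\le\#\mathcal{A}$, (ii) $\tau=pq$, and (iii) $q$ is letter-onto and proper.
   Context: Alphabets are finite sets; $\mathcal{A}^+$ is the free semigroup of nonempty finite words over $\mathcal{A}$, and a morphism is a semigroup homomorphism. $\mathcal{B}^{++}$ denotes the set of words in $\mathcal{B}^+$ in which every letter of $\mathcal{B}$ occurs. For a morphism $\sigma\colon\mathcal{A}^+\to\mathcal{B}^+$, $|\sigma|_1=\sum_{a\in\mathcal{A}}|\sigma(a)|$. $\sigma$ is $r$-proper if there exist $u,v\in\mathcal{B}^r$ such that every $\sigma(a)$, $a\in\mathcal{A}$, starts with $u$ and ends with $v$; proper means $1$-proper; letter-onto means every $b\in\mathcal{B}$ occurs in some $\sigma(a)$. *)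

theory Defs
  imports Main "HOL-Library.Sublist"
begin

text \<open>Words over an alphabet (a finite set) are lists. A morphism
  sigma : A^+ -> B^+ is determined by its values on letters, each a nonempty word over B.\<close>

definition plus :: "'a set \<Rightarrow> 'a list set" where
  "plus A = {w. w \<noteq> [] \<and> set w \<subseteq> A}"

definition plusplus :: "'a set \<Rightarrow> 'a list set" where
  "plusplus A = {w \<in> plus A. A \<subseteq> set w}"

definition morph :: "'a set \<Rightarrow> 'b set \<Rightarrow> ('a \<Rightarrow> 'b list) \<Rightarrow> bool" where
  "morph A B \<sigma> \<longleftrightarrow> (\<forall>a\<in>A. \<sigma> a \<in> plus B)"

definition ext :: "('a \<Rightarrow> 'b list) \<Rightarrow> 'a list \<Rightarrow> 'b list" where
  "ext \<sigma> w = concat (map \<sigma> w)"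

definition size1 :: "'a set \<Rightarrow> ('a \<Rightarrow> 'b list) \<Rightarrow> nat" where
  "size1 A \<sigma> = (\<Sum>a\<in>A. length (\<sigma> a))"

definition r_proper :: "nat \<Rightarrow> 'a set \<Rightarrow> 'b set \<Rightarrow> ('a \<Rightarrow> 'b list) \<Rightarrow> bool" where
  "r_proper r A B \<sigma> \<longleftrightarrow> (\<exists>u v. length u = r \<and> length v = r \<and> set u \<subseteq> B \<and> set v \<subseteq> B \<and>
      (\<forall>a\<in>A. prefix u (\<sigma> a) \<and> suffix v (\<sigma> a)))"

definition proper :: "'a set \<Rightarrow> 'b set \<Rightarrow> ('a \<Rightarrow> 'b list) \<Rightarrow> bool" where
  "proper A B \<sigma> \<longleftrightarrow> r_proper 1 A B \<sigma>"

definition letter_onto :: "'a set \<Rightarrow> 'b set \<Rightarrow> ('a \<Rightarrow> 'b list) \<Rightarrow> bool" where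
  "letter_onto A B \<sigma> \<longleftrightarrow> (\<forall>b\<in>B. \<exists>a\<in>A. b \<in> set (\<sigma> a))"

end

theory Submission
  imports Defs
begin

definition wsum :: "'c list set \<Rightarrow> nat" where
  "wsum X = (\<Sum>x\<in>X. length x)"

definition gen :: "'c list set \<Rightarrow> 'c list \<Rightarrow> bool" where
  "gen Y x \<longleftrightarrow> (\<exists>zs\<in>lists Y. zs \<noteq> [] \<and> concat zs = x)"

definition good :: "'c list set \<Rightarrow> 'c list set \<Rightarrow> bool" where
  "good X Y \<longleftrightarrow> finite Y \<and> [] \<notin> Y \<and> card Y \<le> card X \<and> wsum Y < wsum X \<and> (\<forall>x\<in>X. gen Y x)"

lemma gen_single: "x \<in> Y \<Longrightarrow> gen Y x"
  unfolding gen_def by (rule bexI[of _ "[x]"]) auto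

lemma gen_app: "gen Y a \<Longrightarrow> gen Y b \<Longrightarrow> gen Y (a @ b)"
  unfolding gen_def
  by (metis Nil_is_append_conv append_in_lists_conv concat_append)

lemma gen_concat: "zs \<in> lists X \<Longrightarrow> zs \<noteq> [] \<Longrightarrow> \<forall>x\<in>X. gen Y x \<Longrightarrow> gen Y (concat zs)"
proof (induction zs)
  case Nil then show ?case by simp
next
  case (Cons z zs)
  show ?case
  proof (cases "zs = []")
    case True then show ?thesis using Cons by simp
  next
    case False then show ?thesis using Cons gen_app by fastforce
  qed
qed

lemma gen_lists: "\<forall>x\<in>X. gen Y x \<Longrightarrow> xs \<in> lists X \<Longrightarrow> \<exists>ys\<in>lists Y. concat ys = concat xs"
proof (induction xs)
  case Nil then show ?case by (intro bexI[of _ "[]"]) auto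
next
  case (Cons x xs)
  then obtain ys where "ys \<in> lists Y" "concat ys = concat xs" by auto
  moreover have "gen Y x" using Cons.prems by auto
  then obtain zs where "zs \<in> lists Y" "concat zs = x" unfolding gen_def by auto
  ultimately show ?case by (intro bexI[of _ "zs @ ys"]) auto
qed

lemma wsum_insert_le: "finite S \<Longrightarrow> wsum (insert a S) \<le> length a + wsum S"
  unfolding wsum_def by (cases "a \<in> S") (auto simp: insert_absorb)

lemma wsum_diff: "finite S \<Longrightarrow> x \<in> S \<Longrightarrow> wsum (S - {x}) + length x = wsum S"
  unfolding wsum_def by (metis add.commute sum.remove)

lemma red_lemma:
  assumes fin: "finite X" and ne: "[] \<notin> X" and x2: "x2 \<in> X" and r: "r \<noteq> []" "length r < length x2"
    and zs: "zs \<in> lists (insert r (X - {x2}))" "zs \<noteq> []" "concat zs = x2"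
  shows "good X (insert r (X - {x2}))"
proof -
  let ?Y = "insert r (X - {x2})"
  have "card ?Y \<le> Suc (card (X - {x2}))" using fin by (simp add: card_insert_le_m1)
  also have "\<dots> = card X" using fin x2 by (metis card_Suc_Diff1)
  finally have c: "card ?Y \<le> card X" .
  have "wsum ?Y \<le> length r + wsum (X - {x2})" using fin by (simp add: wsum_insert_le)
  also have "\<dots> < wsum X" using wsum_diff[OF fin x2] r by simp
  finally have w: "wsum ?Y < wsum X" .
  have g: "\<forall>x\<in>X. gen ?Y x"
  proof
    fix x assume "x \<in> X"
    show "gen ?Y x"
    proof (cases "x = x2")
      case True then show ?thesis using zs unfolding gen_def by auto
    next
      case False then show ?thesis using \<open>x \<in> X\<close> by (intro gen_single) auto
    qed
  qed
  show ?thesis unfolding good_def using c w g fin ne r by auto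
qed

lemma prefix_comparable:
  assumes "prefix a c" "prefix b c"
  shows "prefix a b \<or> prefix b a"
  using assms prefix_same_cases by blast

lemma defect:
  fixes X :: "'c list set"
  assumes "finite X" "[] \<notin> X" "\<alpha> \<in> lists X" "\<beta> \<in> lists X" "\<alpha> \<noteq> []" "\<beta> \<noteq> []"
    "concat \<alpha> = concat \<beta>" "hd \<alpha> \<noteq> hd \<beta>"
  shows "\<exists>Y. finite Y \<and> [] \<notin> Y \<and> card Y < card X \<and> wsum Y < wsum X \<and> (\<forall>x\<in>X. gen Y x)"
  using assms
proof (induction "wsum X" arbitrary: X \<alpha> \<beta> rule: less_induct)
  case less
  have main: "\<exists>Y. finite Y \<and> [] \<notin> Y \<and> card Y < card X \<and> wsum Y < wsum X \<and> (\<forall>x\<in>X. gen Y x)"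
    if fin: "finite X" and ne: "[] \<notin> X" and al: "\<alpha> \<in> lists X" and be: "\<beta> \<in> lists X"
      and an: "\<alpha> \<noteq> []" and bn: "\<beta> \<noteq> []" and eq: "concat \<alpha> = concat \<beta>"
      and pr: "prefix (hd \<alpha>) (hd \<beta>)" and hd: "hd \<alpha> \<noteq> hd \<beta>"
      and IH: "\<And>X' \<alpha>' \<beta>'. wsum X' < wsum X \<Longrightarrow> finite X' \<Longrightarrow> [] \<notin> X' \<Longrightarrow> \<alpha>' \<in> lists X' \<Longrightarrow> \<beta>' \<in> lists X'
         \<Longrightarrow> \<alpha>' \<noteq> [] \<Longrightarrow> \<beta>' \<noteq> [] \<Longrightarrow> concat \<alpha>' = concat \<beta>' \<Longrightarrow> hd \<alpha>' \<noteq> hd \<beta>'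
         \<Longrightarrow> \<exists>Y :: 'c list set. finite Y \<and> [] \<notin> Y \<and> card Y < card X' \<and> wsum Y < wsum X' \<and> (\<forall>x\<in>X'. gen Y x)"
    for X :: "'c list set" and \<alpha> \<beta>
  proof -
    define x1 where "x1 = hd \<alpha>"
    define x2 where "x2 = hd \<beta>"
    obtain r where x2r: "x2 = x1 @ r" using pr unfolding x1_def x2_def prefix_def by auto
    have rn: "r \<noteq> []" using hd x2r x1_def x2_def by auto
    have x1X: "x1 \<in> X" using al an x1_def by (cases \<alpha>) auto
    have x2X: "x2 \<in> X" using be bn x2_def by (cases \<beta>) auto
    have x1n: "x1 \<noteq> []" using x1X ne by auto
    have rl: "length r < length x2" using x2r x1n by simp
    let ?Y = "insert r (X - {x2})"
    have x12: "x1 \<noteq> x2" using hd x1_def x2_def by simp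
    have gY: "good X ?Y"
      by (rule red_lemma[OF fin ne x2X rn rl, of "[x1, r]"]) (use x12 x1X x2r in auto)
    show ?thesis
    proof (cases "r \<in> X")
      case True
      have "?Y = X - {x2}" using True rl by auto
      then have "card ?Y < card X" using fin x2X by (metis card_Diff1_less)
      then show ?thesis using gY unfolding good_def by blast
    next
      case False
      define sub where "sub = (\<lambda>L. concat (map (\<lambda>z. if z = x2 then [x1, r] else [z]) L))"
      have csub: "concat (sub L) = concat L" for L
        unfolding sub_def by (induction L) (auto simp: x2r)
      have lsub: "L \<in> lists X \<Longrightarrow> sub L \<in> lists ?Y" for L
        unfolding sub_def by (induction L) (auto simp: x1X x12)
      obtain as where as: "\<alpha> = x1 # as" using an x1_def by (cases \<alpha>) auto
      obtain bs where bs: "\<beta> = x2 # bs" using bn x2_def by (cases \<beta>) auto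
      have e1: "concat (sub as) = concat (r # sub bs)"
        using eq as bs x2r csub by simp
      have asn: "as \<noteq> []" using e1 rn by (auto simp: sub_def)
      then obtain a0 as' where as': "as = a0 # as'" by (cases as) auto
      have a0X: "a0 \<in> X" using al as as' by auto
      have hdsub: "hd (sub as) = (if a0 = x2 then x1 else a0)" using as' unfolding sub_def by simp
      have "hd (sub as) \<noteq> r" using hdsub False a0X x1X by auto
      moreover have "sub as \<noteq> []" using as' unfolding sub_def by auto
      moreover have "sub as \<in> lists ?Y" using lsub al as by auto
      moreover have "r # sub bs \<in> lists ?Y" using lsub be bs by auto
      moreover have "finite ?Y" using fin by simp
      moreover have "[] \<notin> ?Y" using ne rn by auto
      moreover have "wsum ?Y < wsum X" using gY unfolding good_def by simp
      ultimately obtain Y where Y: "finite Y" "[] \<notin> Y" "card Y < card ?Y" "wsum Y < wsum ?Y"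
        "\<forall>x\<in>?Y. gen Y x"
        using IH[of ?Y "sub as" "r # sub bs"] e1 by auto
      have "card ?Y \<le> card X" using gY unfolding good_def by simp
      moreover have "\<forall>x\<in>X. gen Y x"
      proof
        fix x assume "x \<in> X"
        have "gen ?Y x" using gY \<open>x \<in> X\<close> unfolding good_def by auto
        then obtain zs where "zs \<in> lists ?Y" "zs \<noteq> []" "concat zs = x" unfolding gen_def by auto
        then show "gen Y x" using gen_concat Y(5) by metis
      qed
      ultimately show ?thesis using Y \<open>wsum ?Y < wsum X\<close> by (intro exI[of _ Y]) auto
    qed
  qed
  have p1: "prefix (hd \<alpha>) (concat \<alpha>)" using less.prems(5) by (cases \<alpha>) auto
  have p2: "prefix (hd \<beta>) (concat \<beta>)" using less.prems(6) by (cases \<beta>) auto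
  have "prefix (hd \<alpha>) (hd \<beta>) \<or> prefix (hd \<beta>) (hd \<alpha>)"
    using p1 p2 less.prems(7) prefix_comparable by metis
  then show ?case
  proof
    assume "prefix (hd \<alpha>) (hd \<beta>)"
    show ?thesis
      apply (rule main[of X \<alpha> \<beta>])
      using less.prems \<open>prefix (hd \<alpha>) (hd \<beta>)\<close> apply simp_all
      using less.hyps by blast
  next
    assume "prefix (hd \<beta>) (hd \<alpha>)"
    show ?thesis
      apply (rule main[of X \<beta> \<alpha>])
      using less.prems \<open>prefix (hd \<beta>) (hd \<alpha>)\<close> apply simp_all
      using less.hyps by blast
  qed
qed

definition ps :: "'c list list \<Rightarrow> nat \<Rightarrow> nat" where
  "ps xs i = length (concat (take i xs))"

lemma ps_0[simp]: "ps xs 0 = 0" by (simp add: ps_def)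

lemma ps_Suc: "i < length xs \<Longrightarrow> ps xs (Suc i) = ps xs i + length (xs ! i)"
  by (simp add: ps_def take_Suc_conv_app_nth)

lemma ps_ge: "length xs \<le> i \<Longrightarrow> ps xs i = length (concat xs)"
  by (simp add: ps_def)

lemma take_ps: "take (ps xs j) (concat xs) = concat (take j xs)"
proof -
  have e: "concat xs = concat (take j xs) @ concat (drop j xs)"
    by (simp flip: concat_append)
  show ?thesis unfolding ps_def by (subst e) simp
qed

lemma concat_take_split: "i \<le> j \<Longrightarrow> concat (take j xs) = concat (take i xs) @ concat (drop i (take j xs))"
proof -
  assume ij: "i \<le> j"
  have "take j xs = take i (take j xs) @ drop i (take j xs)" by (rule append_take_drop_id[symmetric])
  moreover have "take i (take j xs) = take i xs" using ij by (simp add: min_def)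
  ultimately have "take j xs = take i xs @ drop i (take j xs)" by simp
  then show ?thesis by (metis concat_append)
qed

lemma ps_mono: "i \<le> j \<Longrightarrow> ps xs i \<le> ps xs j"
  unfolding ps_def by (subst concat_take_split[of i j xs]) simp_all

lemma ps_strict: "[] \<notin> set xs \<Longrightarrow> i < j \<Longrightarrow> i < length xs \<Longrightarrow> ps xs i < ps xs j"
proof -
  assume a: "[] \<notin> set xs" "i < j" "i < length xs"
  have "ps xs (Suc i) = ps xs i + length (xs ! i)" using a ps_Suc by blast
  moreover have "xs ! i \<noteq> []" using a nth_mem by metis
  then have "0 < length (xs ! i)" by simp
  moreover have "ps xs (Suc i) \<le> ps xs j" by (rule ps_mono) (use a in simp)
  ultimately show ?thesis by linarith
qed

lemma slice: "i \<le> j \<Longrightarrow> drop (ps xs i) (take (ps xs j) (concat xs)) = concat (drop i (take j xs))"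
  unfolding take_ps using concat_take_split[of i j xs] unfolding ps_def by simp

lemma ps_Cons_Suc: "ps (y # ys) (Suc i) = length y + ps ys i"
  by (simp add: ps_def)

lemma block_exists: "s < length (concat xs) \<Longrightarrow> \<exists>i<length xs. ps xs i \<le> s \<and> s < ps xs (Suc i)"
proof (induction xs arbitrary: s)
  case Nil then show ?case by simp
next
  case (Cons y ys)
  show ?case
  proof (cases "s < length y")
    case True
    have "ps (y # ys) (Suc 0) = length y" by (simp add: ps_def)
    then have "0 < length (y # ys) \<and> ps (y # ys) 0 \<le> s \<and> s < ps (y # ys) (Suc 0)" using True by simp
    then show ?thesis by blast
  next
    case False
    then have "s - length y < length (concat ys)" using Cons.prems by simp
    then obtain i where "i < length ys" "ps ys i \<le> s - length y" "s - length y < ps ys (Suc i)"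
      using Cons.IH by blast
    moreover have "ps (y # ys) (Suc i) = length y + ps ys i" "ps (y # ys) (Suc (Suc i)) = length y + ps ys (Suc i)"
      by (rule ps_Cons_Suc)+
    ultimately have "Suc i < length (y # ys) \<and> ps (y # ys) (Suc i) \<le> s \<and> s < ps (y # ys) (Suc (Suc i))"
      using False \<open>i < length ys\<close> \<open>ps ys i \<le> s - length y\<close> \<open>s - length y < ps ys (Suc i)\<close>
      by auto
    then show ?thesis by blast
  qed
qed

lemma len_concat_le: "\<forall>x\<in>set xs. length x \<le> K \<Longrightarrow> length (concat xs) \<le> length xs * K"
  by (induction xs) auto

lemma split_dt: "a \<le> m \<Longrightarrow> m \<le> n \<Longrightarrow> n \<le> length W \<Longrightarrow>
    drop a (take n W) = drop a (take m W) @ drop m (take n W)"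
proof -
  assume h: "a \<le> m" "m \<le> n" "n \<le> length W"
  have "take n W = take m (take n W) @ drop m (take n W)" by (rule append_take_drop_id[symmetric])
  moreover have "take m (take n W) = take m W" using h by (simp add: min_def)
  ultimately have e: "take n W = take m W @ drop m (take n W)" by simp
  have "length (take m W) = m" using h by simp
  then show ?thesis using h by (subst e) simp
qed

lemma window:
  assumes "take l W = take l (drop c W)" "a \<le> b" "b \<le> l"
  shows "drop a (take b W) = drop (c + a) (take (c + b) W)"
proof -
  have "take b W = take b (take l W)" using assms by (metis min.absorb1 take_take)
  also have "\<dots> = take b (drop c W)" using assms by (metis min.absorb1 take_take)
  also have "\<dots> = drop c (take (b + c) W)" by (simp add: take_drop)
  finally show ?thesis by (simp add: add.commute)
qed

lemma core_step:
  fixes X :: "'c list set"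
  assumes fin: "finite X" and ne: "[] \<notin> X" and xsX: "set xs \<subseteq> X"
    and W: "W = concat xs"
    and win: "take l W = take l (drop c W)"
    and j12: "j1 < j2" "j1 < length xs" and pj2: "ps xs j2 \<le> l"
    and i12: "i1 < i2" "i2 \<le> length xs"
    and s1: "ps xs i1 < c + ps xs j1" "c + ps xs j1 < ps xs (Suc i1)"
    and s2: "c + ps xs j2 = ps xs i2 + e"
    and e: "e = 0 \<or> (e = c + ps xs j1 - ps xs i1 \<and> i2 < length xs \<and> xs ! i2 = xs ! i1)"
    and s2W: "c + ps xs j2 \<le> length W"
  shows "\<exists>Y. good X Y"
proof -
  have i1l: "i1 < length xs" using i12 by simp
  define x where "x = xs ! i1"
  define a where "a = ps xs i1"
  define ofs where "ofs = c + ps xs j1 - a"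
  have xX: "x \<in> X" using xsX i1l x_def nth_mem by blast
  have psS: "ps xs (Suc i1) = a + length x" using ps_Suc[OF i1l] a_def x_def by simp
  have o0: "0 < ofs" and ox: "ofs < length x" using s1 psS a_def ofs_def by auto
  have xslice: "drop a (take (a + length x) W) = x"
    using slice[of i1 "Suc i1" xs] psS i1l unfolding W a_def x_def
    by (simp add: take_Suc_conv_app_nth drop_take)
  then have xW: "take (length x) (drop a W) = x" by (simp add: drop_take)
  define h where "h = take ofs x"
  define g where "g = drop ofs x"
  have xhg: "x = h @ g" unfolding h_def g_def by simp
  have hn: "h \<noteq> []" and gn: "g \<noteq> []" using o0 ox unfolding h_def g_def by auto
  have hl: "length h = ofs" using ox unfolding h_def by simp
  define \<Pi>s where "\<Pi>s = drop j1 (take j2 xs)"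
  define \<pi> where "\<pi> = concat \<Pi>s"
  have lenW: "length W = ps xs (length xs)" using ps_ge[of xs "length xs"] W by simp
  have pj1: "ps xs j1 \<le> ps xs j2" by (rule ps_mono) (use j12 in simp)
  have "\<pi> = drop (ps xs j1) (take (ps xs j2) W)"
    using slice[of j1 j2 xs] j12 unfolding \<pi>_def \<Pi>s_def W by simp
  also have "\<dots> = drop (c + ps xs j1) (take (c + ps xs j2) W)"
    using window[OF win pj1 pj2] .
  finally have \<pi>W: "\<pi> = drop (a + ofs) (take (c + ps xs j2) W)"
    using s1 unfolding ofs_def a_def by simp
  have aoW: "drop a (take (a + ofs) W) = h"
  proof -
    have "drop a (take (a + ofs) W) = take ofs (drop a W)" by (simp add: drop_take)
    also have "\<dots> = take ofs (take (length x) (drop a W))" using ox by simp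
    finally show ?thesis using xW h_def by simp
  qed
  define T where "T = drop a (take (c + ps xs j2) W)"
  have T1: "T = h @ \<pi>"
    unfolding T_def \<pi>W aoW[symmetric]
    by (rule split_dt) (use s1 pj1 s2W ofs_def a_def in auto)
  define Ms where "Ms = drop (Suc i1) (take i2 xs)"
  define E where "E = (if e = 0 then [] else h)"
  have i2ps: "a \<le> ps xs i2" unfolding a_def by (rule ps_mono) (use i12 in simp)
  have T2: "T = concat (drop i1 (take i2 xs)) @ drop (ps xs i2) (take (ps xs i2 + e) W)"
    unfolding T_def s2 a_def
    using split_dt[of "ps xs i1" "ps xs i2" "ps xs i2 + e" W] slice[of i1 i2 xs] i12 i2ps s2 s2W
    unfolding W a_def by simp
  have EE: "drop (ps xs i2) (take (ps xs i2 + e) W) = E"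
  proof (cases "e = 0")
    case True then show ?thesis unfolding E_def by simp
  next
    case False
    then have e2: "e = ofs" "i2 < length xs" "xs ! i2 = x" using e ofs_def a_def x_def by auto
    have psS2: "ps xs (Suc i2) = ps xs i2 + length x" using ps_Suc[OF e2(2)] e2 by simp
    have "drop (ps xs i2) (take (ps xs i2 + length x) W) = x"
      using slice[of i2 "Suc i2" xs] psS2 e2 unfolding W
      by (simp add: take_Suc_conv_app_nth drop_take)
    then have "take (length x) (drop (ps xs i2) W) = x" by (simp add: drop_take)
    then have "take ofs (take (length x) (drop (ps xs i2) W)) = h" using h_def by simp
    then have "take ofs (drop (ps xs i2) W) = h" using ox by simp
    then show ?thesis using False e2 unfolding E_def by (simp add: drop_take)
  qed
  have dl: "drop i1 (take i2 xs) = x # Ms"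
  proof -
    have "i1 < length (take i2 xs)" using i12 by simp
    then have "drop i1 (take i2 xs) = (take i2 xs) ! i1 # drop (Suc i1) (take i2 xs)"
      by (rule Cons_nth_drop_Suc[symmetric])
    moreover have "(take i2 xs) ! i1 = xs ! i1" using i12 by simp
    ultimately show ?thesis unfolding Ms_def x_def by simp
  qed
  have "h @ \<pi> = h @ g @ concat Ms @ E" using T1 T2 EE dl xhg by simp
  then have \<pi>eq: "\<pi> = g @ concat Ms @ E" by simp
  have Msl: "set Ms \<subseteq> X" using xsX unfolding Ms_def by (auto dest: in_set_dropD in_set_takeD)
  have \<Pi>l: "set \<Pi>s \<subseteq> X" using xsX unfolding \<Pi>s_def by (auto dest: in_set_dropD in_set_takeD)
  have hx: "length h < length x" "length g < length x" using xhg hn gn by auto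
  show ?thesis
  proof (cases "h \<in> X \<or> g \<in> X \<or> h = g")
    case True
    then show ?thesis
    proof (elim disjE)
      assume "h \<in> X"
      then have "good X (insert g (X - {x}))"
        by (intro red_lemma[OF fin ne xX gn hx(2), of "[h, g]"]) (use xhg hx in auto)
      then show ?thesis by blast
    next
      assume "g \<in> X"
      then have "good X (insert h (X - {x}))"
        by (intro red_lemma[OF fin ne xX hn hx(1), of "[h, g]"]) (use xhg hx in auto)
      then show ?thesis by blast
    next
      assume "h = g"
      then have "good X (insert h (X - {x}))"
        by (intro red_lemma[OF fin ne xX hn hx(1), of "[h, h]"]) (use xhg hx in auto)
      then show ?thesis by blast
    qed
  next
    case False
    define X2 where "X2 = insert h (insert g (X - {x}))"
    define sub where "sub = (\<lambda>L. concat (map (\<lambda>z. if z = x then [h, g] else [z]) L))"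
    have csub: "concat (sub L) = concat L" for L
      unfolding sub_def by (induction L) (auto simp: xhg)
    have lsub: "set L \<subseteq> X \<Longrightarrow> sub L \<in> lists X2" for L
      unfolding sub_def X2_def by (induction L) auto
    define \<beta> where "\<beta> = g # sub Ms @ (if e = 0 then [] else [h])"
    have c\<beta>: "concat \<beta> = \<pi>" unfolding \<beta>_def \<pi>eq E_def using csub by simp
    have c\<alpha>: "concat (sub \<Pi>s) = \<pi>" using csub \<pi>_def by simp
    have \<Pi>c: "\<Pi>s = xs ! j1 # drop (Suc j1) (take j2 xs)"
    proof -
      have "j1 < length (take j2 xs)" using j12 by simp
      then have "drop j1 (take j2 xs) = (take j2 xs) ! j1 # drop (Suc j1) (take j2 xs)"
        by (rule Cons_nth_drop_Suc[symmetric])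
      moreover have "(take j2 xs) ! j1 = xs ! j1" using j12 by simp
      ultimately show ?thesis unfolding \<Pi>s_def by simp
    qed
    have y1X: "xs ! j1 \<in> X" using xsX j12 nth_mem by blast
    have hda: "hd (sub \<Pi>s) = (if xs ! j1 = x then h else xs ! j1)"
      unfolding \<Pi>c sub_def by simp
    have hdne: "hd (sub \<Pi>s) \<noteq> hd \<beta>" unfolding hda \<beta>_def using False y1X by auto
    have san: "sub \<Pi>s \<noteq> []" unfolding \<Pi>c sub_def by simp
    have finX2: "finite X2" using fin X2_def by simp
    have neX2: "[] \<notin> X2" using ne hn gn X2_def by auto
    have bl: "\<beta> \<in> lists X2" unfolding \<beta>_def using lsub[OF Msl] X2_def by auto
    obtain Y where Y: "finite Y" "[] \<notin> Y" "card Y < card X2" "wsum Y < wsum X2" "\<forall>z\<in>X2. gen Y z"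
    proof -
      have bne: "\<beta> \<noteq> []" unfolding \<beta>_def by simp
      have ceq: "concat (sub \<Pi>s) = concat \<beta>" using c\<alpha> c\<beta> by simp
      show ?thesis using defect[OF finX2 neX2 lsub[OF \<Pi>l] bl san bne ceq hdne] that by blast
    qed
    have "card X2 \<le> Suc (card (insert g (X - {x})))" unfolding X2_def using fin by (simp add: card_insert_le_m1)
    also have "\<dots> \<le> Suc (Suc (card (X - {x})))" using fin by (simp add: card_insert_le_m1)
    also have "\<dots> = Suc (card X)" using card_Suc_Diff1[OF fin xX] by simp
    finally have cX2: "card X2 \<le> Suc (card X)" .
    have "wsum X2 \<le> length h + wsum (insert g (X - {x}))" unfolding X2_def using fin by (simp add: wsum_insert_le)
    also have "\<dots> \<le> length h + (length g + wsum (X - {x}))" using fin wsum_insert_le by (simp add: wsum_insert_le)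
    also have "\<dots> = wsum X" using wsum_diff[OF fin xX] xhg by simp
    finally have wX2: "wsum X2 \<le> wsum X" .
    have "\<forall>z\<in>X. gen Y z"
    proof
      fix z assume "z \<in> X"
      show "gen Y z"
      proof (cases "z = x")
        case True
        have "gen Y h" "gen Y g" using Y(5) X2_def by auto
        then show ?thesis using True xhg gen_app by simp
      next
        case False then show ?thesis using Y(5) \<open>z \<in> X\<close> X2_def by auto
      qed
    qed
    then have "good X Y" unfolding good_def using Y cX2 wX2 by auto
    then show ?thesis by blast
  qed
qed

lemma core:
  fixes X :: "'c list set"
  assumes fin: "finite X" and ne: "[] \<notin> X" and xsX: "set xs \<subseteq> X"
    and W: "W = concat xs"
    and win: "take l W = take l (drop c W)"
    and cnot: "c \<notin> range (ps xs)" and cl: "c + l \<le> length W"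
    and Kl: "wsum X * wsum X \<le> l"
  shows "\<exists>Y. good X Y"
proof -
  define K where "K = wsum X"
  have c0: "c \<noteq> 0" using cnot by (metis ps_0 rangeI)
  have "xs \<noteq> []" using cl c0 W by auto
  then obtain x0 where x0: "x0 \<in> X" using xsX by (cases xs) auto
  have lenK: "length x \<le> K" if "x \<in> X" for x
    unfolding K_def wsum_def using fin that by (simp add: member_le_sum)
  have K0: "0 < K" using lenK[OF x0] x0 ne by (cases x0) auto
  have ne': "[] \<notin> set xs" using ne xsX by auto
  have "length W \<le> length xs * K" unfolding W using lenK xsX by (intro len_concat_le) auto
  moreover have "K * K < length W" using cl c0 Kl K_def by simp
  ultimately have "K * K < length xs * K" by linarith
  then have lxs: "K < length xs" using mult_less_cancel2[of K K "length xs"] by simp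
  have psj: "ps xs j < l" if "j < K" for j
  proof -
    have "ps xs j \<le> length (take j xs) * K"
      unfolding ps_def using lenK xsX by (intro len_concat_le) (auto dest: in_set_takeD)
    also have "\<dots> \<le> j * K" by simp
    also have "\<dots> < K * K" using that K0 by simp
    finally show ?thesis using Kl K_def by simp
  qed
  have sW: "c + ps xs j < length W" if "j < K" for j using psj[OF that] cl by simp
  have blk: "\<exists>i<length xs. ps xs i < c + ps xs j \<and> c + ps xs j < ps xs (Suc i)"
    if jK: "j < K" and jn: "c + ps xs j \<notin> range (ps xs)" for j
  proof -
    obtain i where "i < length xs" "ps xs i \<le> c + ps xs j" "c + ps xs j < ps xs (Suc i)"
      using block_exists[of "c + ps xs j" xs] sW[OF jK] W by auto
    moreover have "ps xs i \<noteq> c + ps xs j" using jn by (metis rangeI)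
    ultimately show ?thesis by auto
  qed
  have psstrict: "j1 < j2 \<Longrightarrow> j2 < K \<Longrightarrow> ps xs j1 < ps xs j2" for j1 j2
    using ps_strict[OF ne'] lxs by simp
  show ?thesis
  proof (cases "\<exists>j. 0 < j \<and> j < K \<and> c + ps xs j \<in> range (ps xs)")
    case True
    define P where "P = (\<lambda>j. 0 < j \<and> j < K \<and> c + ps xs j \<in> range (ps xs))"
    define j where "j = (LEAST j. P j)"
    have Pj: "P j" using True LeastI_ex[of P] unfolding j_def P_def by blast
    define j1 where "j1 = j - 1"
    have j1j: "j1 < j" "Suc j1 = j" using Pj unfolding j1_def P_def by auto
    have nP: "c + ps xs j1 \<notin> range (ps xs)"
    proof (cases "j1 = 0")
      case True then show ?thesis using cnot by simp
    next
      case False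
      have "\<not> P j1" using not_less_Least[of j1 P] j1j unfolding j_def by blast
      then show ?thesis using False j1j Pj unfolding P_def by auto
    qed
    have j1K: "j1 < K" using j1j Pj P_def by auto
    obtain i1 where i1: "i1 < length xs" "ps xs i1 < c + ps xs j1" "c + ps xs j1 < ps xs (Suc i1)"
      using blk[OF j1K nP] by blast
    obtain i2' where i2': "c + ps xs j = ps xs i2'" using Pj P_def by auto
    define i2 where "i2 = min i2' (length xs)"
    have i2: "c + ps xs j = ps xs i2" "i2 \<le> length xs"
      using i2' ps_ge[of xs i2'] ps_ge[of xs "length xs"] unfolding i2_def by (auto simp: min_def)
    have "ps xs j1 < ps xs j" using psstrict j1j Pj P_def by auto
    then have pi: "ps xs i1 < ps xs i2" using i1 i2 by simp
    have i12: "i1 < i2"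
    proof (rule ccontr)
      assume "\<not> i1 < i2"
      then have "ps xs i2 \<le> ps xs i1" by (intro ps_mono) simp
      then show False using pi by simp
    qed
    show ?thesis
      by (rule core_step[OF fin ne xsX W win, of j1 j i1 i2 0])
         (use j1j j1K lxs psj[of j] Pj P_def i12 i2 i1 sW[of j] in auto)
  next
    case False
    then have nR: "c + ps xs j \<notin> range (ps xs)" if "j < K" for j
      using that cnot by (cases "j = 0") auto
    define Q where "Q = (\<lambda>j (p :: 'c list \<times> nat). \<exists>i<length xs. ps xs i < c + ps xs j \<and> c + ps xs j < ps xs (Suc i)
       \<and> fst p = xs ! i \<and> snd p = c + ps xs j - ps xs i)"
    define st where "st = (\<lambda>j. SOME p. Q j p)"
    have Qst: "Q j (st j)" if jK: "j < K" for j
    proof -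
      obtain i where "i<length xs" "ps xs i < c + ps xs j" "c + ps xs j < ps xs (Suc i)"
        using blk[OF jK nR[OF jK]] by blast
      then have "Q j (xs ! i, c + ps xs j - ps xs i)" unfolding Q_def by auto
      then show ?thesis unfolding st_def by (rule someI)
    qed
    define S where "S = Sigma X (\<lambda>x. {1..<length x})"
    have stS: "st ` {..<K} \<subseteq> S"
    proof
      fix p assume "p \<in> st ` {..<K}"
      then obtain j where j: "j < K" "p = st j" by auto
      obtain i where i: "i<length xs" "ps xs i < c + ps xs j" "c + ps xs j < ps xs (Suc i)"
        "fst p = xs ! i" "snd p = c + ps xs j - ps xs i"
        using Qst[OF j(1)] j(2) unfolding Q_def by blast
      have "xs ! i \<in> X" using i(1) xsX nth_mem by blast
      moreover have "snd p < length (xs ! i)" using i ps_Suc[OF i(1)] by simp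
      ultimately show "p \<in> S" unfolding S_def using i by (cases p) auto
    qed
    have finS: "finite S" unfolding S_def using fin by simp
    have "card S = (\<Sum>x\<in>X. length x - 1)" unfolding S_def using fin by simp
    also have "\<dots> < (\<Sum>x\<in>X. length x)"
    proof (rule sum_strict_mono[OF fin])
      show "X \<noteq> {}" using x0 by auto
      fix x assume "x \<in> X" then have "x \<noteq> []" using ne by auto
      then show "length x - 1 < length x" by (cases x) auto
    qed
    finally have cS: "card S < K" unfolding K_def wsum_def .
    have "\<not> inj_on st {..<K}"
    proof
      assume "inj_on st {..<K}"
      then have "card {..<K} \<le> card S" using card_inj_on_le stS finS by blast
      then show False using cS by simp
    qed
    then obtain ja jb where jab: "ja < K" "jb < K" "ja \<noteq> jb" "st ja = st jb"
      unfolding inj_on_def by blast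
    define j1 where "j1 = min ja jb"
    define j2 where "j2 = max ja jb"
    have j12: "j1 < j2" "j2 < K" "st j1 = st j2" "j1 < K"
      using jab unfolding j1_def j2_def by (auto simp: min_def max_def)
    obtain i1 where i1: "i1<length xs" "ps xs i1 < c + ps xs j1" "c + ps xs j1 < ps xs (Suc i1)"
        "fst (st j1) = xs ! i1" "snd (st j1) = c + ps xs j1 - ps xs i1"
      using Qst[OF j12(4)] unfolding Q_def by blast
    obtain i2 where i2: "i2<length xs" "ps xs i2 < c + ps xs j2" "c + ps xs j2 < ps xs (Suc i2)"
        "fst (st j2) = xs ! i2" "snd (st j2) = c + ps xs j2 - ps xs i2"
      using Qst[OF j12(2)] unfolding Q_def by blast
    have pj: "ps xs j1 < ps xs j2" using psstrict j12 by simp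
    have o: "c + ps xs j1 - ps xs i1 = c + ps xs j2 - ps xs i2" using i1(5) i2(5) j12(3) by simp
    have pi: "ps xs i1 < ps xs i2" using o pj i1(2) i2(2) by linarith
    have i12: "i1 < i2"
    proof (rule ccontr)
      assume "\<not> i1 < i2"
      then have "ps xs i2 \<le> ps xs i1" by (intro ps_mono) simp
      then show False using pi by simp
    qed
    have xeq: "xs ! i2 = xs ! i1" using i1(4) i2(4) j12(3) by simp
    show ?thesis
      by (rule core_step[OF fin ne xsX W win, of j1 j2 i1 i2 "c + ps xs j1 - ps xs i1"])
         (use j12 lxs psj[of j2] i12 i1 i2 o xeq sW[of j2] in auto)
  qed
qed

lemma drop_ps: "drop (ps xs i) (concat xs) = concat (drop i xs)"
proof -
  have e: "concat xs = concat (take i xs) @ concat (drop i xs)"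
    by (simp flip: concat_append)
  show ?thesis unfolding ps_def by (subst e) simp
qed

lemma ps_le_len: "ps xs i \<le> length (concat xs)"
proof -
  have "ps xs i \<le> ps xs (max i (length xs))" by (rule ps_mono) simp
  also have "\<dots> = length (concat xs)" by (rule ps_ge) simp
  finally show ?thesis .
qed

lemma sq_le4: "(K::nat) * K \<le> K ^ 4"
proof -
  have "K ^ 4 = (K * K) * (K * K)" by (simp add: eval_nat_numeral)
  moreover have "n \<le> n * n" for n :: nat by (cases n) auto
  ultimately show ?thesis by simp
qed

lemma le4: "(K::nat) \<le> K ^ 4"
proof -
  have "K \<le> K * K" by (cases K) auto
  then show ?thesis using sq_le4[of K] by linarith
qed

lemma main:
  fixes \<tau> :: "'b \<Rightarrow> 'c list" and X :: "'c list set" and xs :: "'c list list"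
  assumes mB: "morph B C \<tau>" and ul: "length u = l" and vl: "length v = l"
    and uv: "\<forall>b\<in>B. prefix u (\<tau> b) \<and> suffix v (\<tau> b)" and ys: "ys \<in> plusplus B"
  shows "finite X \<Longrightarrow> [] \<notin> X \<Longrightarrow> wsum X ^ 4 \<le> l \<Longrightarrow> set xs \<subseteq> X \<Longrightarrow> concat xs = concat (map \<tau> ys) \<Longrightarrow>
    \<exists>(D::nat set) (q::'b \<Rightarrow> nat list) (p::nat \<Rightarrow> 'c list). finite D \<and> morph B D q \<and> morph D C p \<and>
      card D \<le> card X \<and> (\<forall>b\<in>B. concat (map p (q b)) = \<tau> b) \<and> letter_onto B D q \<and> proper B D q"
proof (induction "wsum X" arbitrary: X xs rule: less_induct)
  case less
  have fin: "finite X" and ne: "[] \<notin> X" and K4: "wsum X ^ 4 \<le> l" and xsX: "set xs \<subseteq> X"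
    and eq: "concat xs = concat (map \<tau> ys)" using less.prems by auto
  define W where "W = concat xs"
  define K where "K = wsum X"
  have Kl: "K \<le> l" using K4 le4[of K] K_def by simp
  have Kl2: "K * K \<le> l" using K4 sq_le4[of K] K_def by simp
  have red: "\<exists>(D::nat set) (q::'b \<Rightarrow> nat list) (p::nat \<Rightarrow> 'c list). finite D \<and> morph B D q \<and> morph D C p \<and>
      card D \<le> card X \<and> (\<forall>b\<in>B. concat (map p (q b)) = \<tau> b) \<and> letter_onto B D q \<and> proper B D q"
    if gY: "good X Y" for Y
  proof -
    have Y: "finite Y" "[] \<notin> Y" "card Y \<le> card X" "wsum Y < wsum X" "\<forall>x\<in>X. gen Y x"
      using gY unfolding good_def by auto
    obtain xs' where xs': "xs' \<in> lists Y" "concat xs' = concat xs"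
      using gen_lists[OF Y(5)] xsX by (meson in_listsI subsetD)
    have "wsum Y ^ 4 \<le> wsum X ^ 4" using Y(4) by (intro power_mono) simp_all
    then have Y4: "wsum Y ^ 4 \<le> l" using K4 by linarith
    have xs'Y: "set xs' \<subseteq> Y" using xs'(1) by auto
    have ceq: "concat xs' = concat (map \<tau> ys)" using xs'(2) eq by simp
    obtain D :: "nat set" and q :: "'b \<Rightarrow> nat list" and p :: "nat \<Rightarrow> 'c list" where Dqp: "finite D" "morph B D q" "morph D C p" "card D \<le> card Y"
        "(\<forall>b\<in>B. concat (map p (q b)) = \<tau> b)" "letter_onto B D q" "proper B D q"
      using less.hyps[OF Y(4) Y(1) Y(2) Y4 xs'Y ceq] by blast
    then show ?thesis using Y(3) by (intro exI[of _ D] exI[of _ q] exI[of _ p]) auto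
  qed
  have ysne: "ys \<noteq> []" and ysB: "set ys \<subseteq> B" and Bys: "B \<subseteq> set ys"
    using ys unfolding plusplus_def plus_def by auto
  have \<tau>ne: "\<tau> b \<noteq> []" and \<tau>C: "set (\<tau> b) \<subseteq> C" if "b \<in> B" for b
    using mB that unfolding morph_def plus_def by auto
  have WW: "W = concat (map \<tau> ys)" using eq W_def by simp
  define pst where "pst = ps (map \<tau> ys)"
  show ?case
  proof (cases "\<forall>i. pst i \<in> range (ps xs)")
    case False
    then obtain i where cnot: "pst i \<notin> range (ps xs)" by blast
    define c where "c = pst i"
    have i0: "i \<noteq> 0" using cnot unfolding pst_def by (metis ps_0 rangeI)
    have ilen: "i < length ys"
    proof (rule ccontr)
      assume "\<not> i < length ys"
      then have "pst i = length W" unfolding pst_def WW by (simp add: ps_ge)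
      also have "\<dots> = ps xs (length xs)" unfolding W_def by (simp add: ps_ge)
      finally show False using cnot by auto
    qed
    define b where "b = ys ! i"
    have bB: "b \<in> B" using ysB ilen b_def nth_mem by blast
    have "drop c W = concat (drop i (map \<tau> ys))" unfolding c_def pst_def WW by (rule drop_ps)
    also have "drop i (map \<tau> ys) = \<tau> b # drop (Suc i) (map \<tau> ys)"
    proof -
      have "i < length (map \<tau> ys)" using ilen by simp
      then have "drop i (map \<tau> ys) = (map \<tau> ys) ! i # drop (Suc i) (map \<tau> ys)"
        by (rule Cons_nth_drop_Suc[symmetric])
      then show ?thesis using ilen b_def by simp
    qed
    finally have dc: "drop c W = \<tau> b @ concat (drop (Suc i) (map \<tau> ys))" by simp
    obtain z where z: "\<tau> b = u @ z" using uv bB unfolding prefix_def by auto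
    have win2: "take l (drop c W) = u" using dc z ul by simp
    obtain y0 ys' where y0: "ys = y0 # ys'" using ysne by (cases ys) auto
    have y0B: "y0 \<in> B" using ysB y0 by auto
    obtain z0 where z0: "\<tau> y0 = u @ z0" using uv y0B unfolding prefix_def by auto
    have win1: "take l W = u" unfolding WW using y0 z0 ul by simp
    have "c \<le> length W" unfolding c_def pst_def WW by (rule ps_le_len)
    moreover have "l \<le> length (drop c W)" using dc z ul by simp
    ultimately have cl: "c + l \<le> length W" by simp
    have cnot': "c \<notin> range (ps xs)" using cnot c_def by simp
    obtain Y where "good X Y"
      using core[OF fin ne xsX W_def _ cnot' cl] win1 win2 Kl2 K_def by auto
    then show ?thesis using red by blast
  next
    case True
    have Fex: "\<exists>F. set F \<subseteq> X \<and> F \<noteq> [] \<and> concat F = \<tau> b" if bB: "b \<in> B" for b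
    proof -
      have "b \<in> set ys" using Bys bB by blast
      then obtain i where i: "i < length ys" "ys ! i = b" by (auto simp: in_set_conv_nth)
      have "pst i \<in> range (ps xs)" using True by blast
      then obtain i' where i': "pst i = ps xs i'" by auto
      have "pst (Suc i) \<in> range (ps xs)" using True by blast
      then obtain j' where j': "pst (Suc i) = ps xs j'" by auto
      have "drop i (take (Suc i) (map \<tau> ys)) = [\<tau> b]" using i by (simp add: take_Suc_conv_app_nth)
      then have "\<tau> b = drop (pst i) (take (pst (Suc i)) W)"
        using slice[of i "Suc i" "map \<tau> ys"] unfolding pst_def WW by simp
      then have tb: "\<tau> b = drop (ps xs i') (take (ps xs j') (concat xs))" using i' j' W_def by simp
      have ij: "i' \<le> j'"
      proof (rule ccontr)
        assume "\<not> i' \<le> j'"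
        then have "ps xs j' \<le> ps xs i'" by (intro ps_mono) simp
        then have "\<tau> b = []" using tb by simp
        then show False using \<tau>ne bB by simp
      qed
      have tbF: "\<tau> b = concat (drop i' (take j' xs))" using tb slice[OF ij] by simp
      have sX: "set (drop i' (take j' xs)) \<subseteq> X" using xsX by (auto dest: in_set_dropD in_set_takeD)
      have nE: "drop i' (take j' xs) \<noteq> []"
      proof
        assume "drop i' (take j' xs) = []"
        then have "\<tau> b = []" using tbF by simp
        then show False using \<tau>ne bB by simp
      qed
      show ?thesis by (intro exI[of _ "drop i' (take j' xs)"]) (use tbF sX nE in simp)
    qed
    define F where "F = (\<lambda>b. SOME F. set F \<subseteq> X \<and> F \<noteq> [] \<and> concat F = \<tau> b)"
    have FP0: "set (F b) \<subseteq> X \<and> F b \<noteq> [] \<and> concat (F b) = \<tau> b" if bB: "b \<in> B" for b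
      unfolding F_def by (rule someI_ex[OF Fex[OF bB]])
    have FP: "set (F b) \<subseteq> X" "F b \<noteq> []" "concat (F b) = \<tau> b" if bB: "b \<in> B" for b
      using FP0[OF bB] by simp_all
    have lenX: "length x \<le> l" if "x \<in> X" for x
    proof -
      have "length x \<le> K" unfolding K_def wsum_def using member_le_sum[of x X length] fin that by simp
      then show ?thesis using Kl by simp
    qed
    have predhelp: "\<exists>(D::nat set) (q::'b \<Rightarrow> nat list) (p::nat \<Rightarrow> 'c list). finite D \<and> morph B D q \<and> morph D C p \<and>
      card D \<le> card X \<and> (\<forall>b\<in>B. concat (map p (q b)) = \<tau> b) \<and> letter_onto B D q \<and> proper B D q"
      if aX: "a \<in> X" and bX: "b \<in> X" and ab: "a \<noteq> b" and pre: "prefix a b \<or> suffix a b" for a b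
    proof -
      obtain r where r: "b = a @ r \<or> b = r @ a" using pre unfolding prefix_def suffix_def by auto
      have rn: "r \<noteq> []" using r ab by auto
      have an: "a \<noteq> []" using aX ne by auto
      have rl: "length r < length b" using r an by auto
      have "good X (insert r (X - {b}))"
      proof (cases "b = a @ r")
        case True then show ?thesis
          by (intro red_lemma[OF fin ne bX rn rl, of "[a, r]"]) (use aX ab in auto)
      next
        case False then have "b = r @ a" using r by simp
        then show ?thesis
          by (intro red_lemma[OF fin ne bX rn rl, of "[r, a]"]) (use aX ab in auto)
      qed
      then show ?thesis using red by blast
    qed
    show ?thesis
    proof (cases "\<exists>b1\<in>B. \<exists>b2\<in>B. hd (F b1) \<noteq> hd (F b2)")
      case True
      then obtain b1 b2 where b: "b1 \<in> B" "b2 \<in> B" "hd (F b1) \<noteq> hd (F b2)" by blast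
      have hp: "prefix (hd (F b')) u" "hd (F b') \<in> X" if "b' \<in> B" for b'
      proof -
        have "F b' = hd (F b') # tl (F b')" using FP(2)[OF that] by simp
        then have "\<tau> b' = hd (F b') @ concat (tl (F b'))" using FP(3)[OF that]
          by (metis concat.simps(2))
        then have p1: "prefix (hd (F b')) (\<tau> b')" unfolding prefix_def by blast
        show "hd (F b') \<in> X" using FP(1,2)[OF that] by (meson hd_in_set subsetD)
        then have "length (hd (F b')) \<le> length u" using lenX ul by simp
        then show "prefix (hd (F b')) u" using prefix_length_prefix p1 uv that by blast
      qed
      have "prefix (hd (F b1)) (hd (F b2)) \<or> prefix (hd (F b2)) (hd (F b1))"
        using prefix_same_cases hp(1)[OF b(1)] hp(1)[OF b(2)] by blast
      then show ?thesis
      proof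
        assume "prefix (hd (F b1)) (hd (F b2))"
        then show ?thesis using predhelp[of "hd (F b1)" "hd (F b2)"] hp(2)[OF b(1)] hp(2)[OF b(2)] b(3) by blast
      next
        assume "prefix (hd (F b2)) (hd (F b1))"
        then show ?thesis using predhelp[of "hd (F b2)" "hd (F b1)"] hp(2)[OF b(1)] hp(2)[OF b(2)] b(3) by auto
      qed
    next
      case False
      then have hdeq: "\<forall>b1\<in>B. \<forall>b2\<in>B. hd (F b1) = hd (F b2)" by blast
      show ?thesis
      proof (cases "\<exists>b1\<in>B. \<exists>b2\<in>B. last (F b1) \<noteq> last (F b2)")
        case True
        then obtain b1 b2 where b: "b1 \<in> B" "b2 \<in> B" "last (F b1) \<noteq> last (F b2)" by blast
        have hp: "suffix (last (F b')) v" "last (F b') \<in> X" if "b' \<in> B" for b'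
        proof -
          have "F b' = butlast (F b') @ [last (F b')]" using FP(2)[OF that] by simp
          then have "\<tau> b' = concat (butlast (F b')) @ last (F b')" using FP(3)[OF that]
            by (metis concat.simps(1,2) concat_append append_Nil2)
          then have p1: "suffix (last (F b')) (\<tau> b')" unfolding suffix_def by blast
          show "last (F b') \<in> X" using FP(1,2)[OF that] by (meson last_in_set subsetD)
          then have "length (last (F b')) \<le> length v" using lenX vl by simp
          then show "suffix (last (F b')) v" using suffix_length_suffix p1 uv that by blast
        qed
        have "suffix (last (F b1)) (last (F b2)) \<or> suffix (last (F b2)) (last (F b1))"
          using suffix_same_cases hp(1)[OF b(1)] hp(1)[OF b(2)] by blast
        then show ?thesis
        proof
          assume "suffix (last (F b1)) (last (F b2))"
          then show ?thesis using predhelp[of "last (F b1)" "last (F b2)"] hp(2)[OF b(1)] hp(2)[OF b(2)] b(3) by blast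
        next
          assume "suffix (last (F b2)) (last (F b1))"
          then show ?thesis using predhelp[of "last (F b2)" "last (F b1)"] hp(2)[OF b(1)] hp(2)[OF b(2)] b(3) by auto
        qed
      next
        case False
        then have lasteq: "\<forall>b1\<in>B. \<forall>b2\<in>B. last (F b1) = last (F b2)" by blast
        define Xu where "Xu = (\<Union>b\<in>B. set (F b))"
        have finB: "finite B" using Bys finite_subset by blast
        have finXu: "finite Xu" unfolding Xu_def using finB by simp
        have XuX: "Xu \<subseteq> X" unfolding Xu_def using FP(1) by auto
        obtain f where f: "bij_betw f {0..<card Xu} Xu" using ex_bij_betw_nat_finite[OF finXu] by blast
        define D where "D = {0..<card Xu}"
        define g where "g = inv_into D f"
        define q where "q = (\<lambda>b. map g (F b))"
        have fD: "f ` D = Xu" using f D_def by (simp add: bij_betw_def)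
        have injf: "inj_on f D" using f D_def by (simp add: bij_betw_def)
        have gD: "g y \<in> D" if "y \<in> Xu" for y using that fD g_def by (metis inv_into_into)
        have fg: "f (g y) = y" if "y \<in> Xu" for y using that fD g_def by (metis f_inv_into_f)
        have gf: "g (f d) = d" if "d \<in> D" for d using that injf g_def by (simp add: inv_into_f_f)
        have FXu: "set (F b) \<subseteq> Xu" if "b \<in> B" for b using that Xu_def by auto
        have cD: "card D \<le> card X" unfolding D_def using card_mono[OF fin XuX] by simp
        have mq: "morph B D q" unfolding morph_def plus_def q_def
          using FP(2) FXu gD by auto
        have mp: "morph D C f" unfolding morph_def plus_def
        proof
          fix d assume dD: "d \<in> D"
          then have "f d \<in> Xu" using fD by auto
          then obtain b where bB: "b \<in> B" and fb: "f d \<in> set (F b)" unfolding Xu_def by auto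
          have ne1: "f d \<noteq> []" using \<open>f d \<in> Xu\<close> XuX ne by auto
          have "set (f d) \<subseteq> set (concat (F b))" using fb by auto
          then have "set (f d) \<subseteq> set (\<tau> b)" using FP(3)[OF bB] by simp
          then show "f d \<in> {w. w \<noteq> [] \<and> set w \<subseteq> C}" using \<tau>C[OF bB] ne1 by auto
        qed
        have comp: "\<forall>b\<in>B. concat (map f (q b)) = \<tau> b"
        proof
          fix b assume bB: "b \<in> B"
          have "map f (q b) = F b" unfolding q_def using FXu[OF bB] fg
            by (simp add: map_idI subset_iff)
          then show "concat (map f (q b)) = \<tau> b" using FP(3)[OF bB] by simp
        qed
        have lo: "letter_onto B D q" unfolding letter_onto_def
        proof
          fix d assume dD: "d \<in> D"
          then have "f d \<in> Xu" using fD by auto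
          then obtain b where bB: "b \<in> B" and fb: "f d \<in> set (F b)" unfolding Xu_def by auto
          then have "g (f d) \<in> set (q b)" unfolding q_def by simp
          then show "\<exists>b\<in>B. d \<in> set (q b)" using gf[OF dD] bB by auto
        qed
        obtain b0 where b0: "b0 \<in> B" using ysne ysB Bys by (cases ys) auto
        define x0 where "x0 = hd (F b0)"
        define x1 where "x1 = last (F b0)"
        have x0Xu: "x0 \<in> Xu" using FXu[OF b0] FP(2)[OF b0] x0_def by (meson hd_in_set subsetD)
        have x1Xu: "x1 \<in> Xu" using FXu[OF b0] FP(2)[OF b0] x1_def by (meson last_in_set subsetD)
        have pall: "\<forall>b\<in>B. prefix [g x0] (q b) \<and> suffix [g x1] (q b)"
        proof
          fix b assume bB: "b \<in> B"
          have h0: "hd (F b) = x0" using hdeq bB b0 unfolding x0_def by blast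
          have Fhd: "F b = hd (F b) # tl (F b)" using FP(2)[OF bB] by (rule hd_Cons_tl[symmetric])
          have "q b = map g (hd (F b) # tl (F b))" unfolding q_def by (subst Fhd) (rule refl)
          then have "q b = g x0 # map g (tl (F b))" using h0 by simp
          then have P1: "prefix [g x0] (q b)" by simp
          have l0: "last (F b) = x1" using lasteq bB b0 unfolding x1_def by blast
          have Fl: "F b = butlast (F b) @ [last (F b)]" using FP(2)[OF bB] by (rule append_butlast_last_id[symmetric])
          have "q b = map g (butlast (F b) @ [last (F b)])" unfolding q_def by (subst Fl) (rule refl)
          then have "q b = map g (butlast (F b)) @ [g x1]" using l0 by simp
          then have P2: "suffix [g x1] (q b)" unfolding suffix_def by blast
          show "prefix [g x0] (q b) \<and> suffix [g x1] (q b)" using P1 P2 by simp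
        qed
        have pr: "proper B D q" unfolding proper_def r_proper_def
          by (intro exI[of _ "[g x0]"] exI[of _ "[g x1]"]) (use gD x0Xu x1Xu pall in auto)
        show ?thesis
          using cD mq mp comp lo pr unfolding D_def
          by (intro exI[of _ D] exI[of _ q] exI[of _ f]) (auto simp: D_def)
      qed
    qed
  qed
qed

theorem lemma3p6:
  fixes A :: "'a set" and B :: "'b set" and C :: "'c set"
    and \<phi> :: "'a \<Rightarrow> 'c list" and \<tau> :: "'b \<Rightarrow> 'c list" and l :: nat
  assumes "finite A" and "finite B" and "finite C"
    and "morph A C \<phi>" and "morph B C \<tau>"
    and "r_proper l B C \<tau>" and "l \<ge> size1 A \<phi> ^ 4"
    and "\<exists>x\<in>plus A. \<exists>y\<in>plusplus B. ext \<phi> x = ext \<tau> y"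
  shows "\<exists>(D :: nat set) (q :: 'b \<Rightarrow> nat list) (p :: nat \<Rightarrow> 'c list).
           finite D \<and> morph B D q \<and> morph D C p \<and>
           card D \<le> card A \<and>
           (\<forall>w\<in>plus B. ext p (ext q w) = ext \<tau> w) \<and>
           letter_onto B D q \<and> proper B D q"
proof -
  note a = assms
  obtain x y where x: "x \<in> plus A" and y: "y \<in> plusplus B" and xy: "ext \<phi> x = ext \<tau> y"
    using a(8) by blast
  obtain u v where uv: "length u = l" "length v = l" "\<forall>b\<in>B. prefix u (\<tau> b) \<and> suffix v (\<tau> b)"
    using a(6) unfolding r_proper_def by blast
  define X where "X = \<phi> ` A"
  have finX: "finite X" using a(1) X_def by simp
  have neX: "[] \<notin> X" using a(4) unfolding X_def morph_def plus_def by auto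
  have "wsum X \<le> sum (length \<circ> \<phi>) A" unfolding wsum_def X_def
    by (rule sum_image_le[OF a(1)]) simp
  then have "wsum X \<le> size1 A \<phi>" unfolding size1_def by simp
  then have "wsum X ^ 4 \<le> size1 A \<phi> ^ 4" by (intro power_mono) simp_all
  then have X4: "wsum X ^ 4 \<le> l" using a(7) by linarith
  have xsX: "set (map \<phi> x) \<subseteq> X" using x unfolding plus_def X_def by auto
  have ceq: "concat (map \<phi> x) = concat (map \<tau> y)" using xy unfolding ext_def by simp
  obtain D :: "nat set" and q :: "'b \<Rightarrow> nat list" and p :: "nat \<Rightarrow> 'c list" where
    D: "finite D" "morph B D q" "morph D C p" "card D \<le> card X"
       "\<forall>b\<in>B. concat (map p (q b)) = \<tau> b" "letter_onto B D q" "proper B D q"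
    using main[OF a(5) uv(1) uv(2) uv(3) y finX neX X4 xsX ceq] by blast
  have cA: "card D \<le> card A" using D(4) card_image_le[OF a(1), of \<phi>] X_def by simp
  have comp: "ext p (ext q w) = ext \<tau> w" if "w \<in> plus B" for w
  proof -
    have "set w \<subseteq> B" using that unfolding plus_def by simp
    then show ?thesis unfolding ext_def using D(5)
      by (induction w) auto
  qed
  show ?thesis using D cA comp by blast
qed

end
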